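(* Under the standing assumptions, let $v$ be a vertex of degree $7$ in $G$. If there is a vertex $u$ of degree $3$ such that the edge $vu$ lies on a $3$-face, then there is no other vertex $w\neq u$ of degree $3$ such that the edge $vw$ lies on a $3$-face.
   Context: Standing assumptions: A total $9$-coloring of a graph is an assignment of colors from $\{1,\dots,9\}$ to the vertices and edges such that adjacent vertices, edges sharing an endpoint, and a vertex and an incident edge receive different colors. A $4$-fan is the graph on six vertices $c,u_1,\dots,u_5$ with edges $cu_j$ ($1\le j\le5$) and $u_ju_{j+1}$ ($1\le j\le4$). $G$ is a minimal counterexample: $G$ is a simple planar graph with maximum degree $8$, containing no subgraph isomorphic to a $4$-fan, that has no total $9$-coloring, and such that every simple planar graph $H$ with maximum degree at most $8$, no subgraph isomorphic to a $4$-fan, and $|V(H)|+|E(H)|<|V(G)|+|E(G)|$ has a total $9$-coloring. $G$ is considered with a fixed plane embedding; a $3$-face is a face of length $3$. *)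

theory Defs
  imports "HOL-Analysis.Analysis"
begin

definition simple_graph :: "'a set \<Rightarrow> 'a set set \<Rightarrow> bool" where
  "simple_graph V E \<longleftrightarrow> finite V \<and>
     (\<forall>e\<in>E. \<exists>x y. e = {x, y} \<and> x \<noteq> y \<and> x \<in> V \<and> y \<in> V)"

definition deg :: "'a set set \<Rightarrow> 'a \<Rightarrow> nat" where
  "deg E v = card {e \<in> E. v \<in> e}"

definition max_degree :: "'a set \<Rightarrow> 'a set set \<Rightarrow> nat" where
  "max_degree V E = Max (deg E ` V)"

definition has_4fan :: "'a set \<Rightarrow> 'a set set \<Rightarrow> bool" where
  "has_4fan V E \<longleftrightarrow> (\<exists>c u. c \<in> V \<and> inj_on u {1..5::nat} \<and> u ` {1..5} \<subseteq> V \<and>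
      c \<notin> u ` {1..5} \<and>
      (\<forall>j\<in>{1..5}. {c, u j} \<in> E) \<and> (\<forall>j\<in>{1..4}. {u j, u (Suc j)} \<in> E))"

definition total_coloring :: "nat \<Rightarrow> 'a set \<Rightarrow> 'a set set \<Rightarrow> ('a \<Rightarrow> nat) \<Rightarrow> ('a set \<Rightarrow> nat) \<Rightarrow> bool" where
  "total_coloring k V E cv ce \<longleftrightarrow>
     (\<forall>v\<in>V. cv v \<in> {1..k}) \<and> (\<forall>e\<in>E. ce e \<in> {1..k}) \<and>
     (\<forall>x y. {x, y} \<in> E \<longrightarrow> x \<noteq> y \<longrightarrow> cv x \<noteq> cv y) \<and>
     (\<forall>e1\<in>E. \<forall>e2\<in>E. e1 \<noteq> e2 \<and> e1 \<inter> e2 \<noteq> {} \<longrightarrow> ce e1 \<noteq> ce e2) \<and>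
     (\<forall>e\<in>E. \<forall>v\<in>e. cv v \<noteq> ce e)"

definition total_colorable :: "nat \<Rightarrow> 'a set \<Rightarrow> 'a set set \<Rightarrow> bool" where
  "total_colorable k V E \<longleftrightarrow> (\<exists>cv ce. total_coloring k V E cv ce)"

definition plane_embedding ::
  "'a set \<Rightarrow> 'a set set \<Rightarrow> ('a \<Rightarrow> complex) \<Rightarrow> ('a set \<Rightarrow> real \<Rightarrow> complex) \<Rightarrow> bool" where
  "plane_embedding V E p \<gamma> \<longleftrightarrow>
     inj_on p V \<and>
     (\<forall>e\<in>E. arc (\<gamma> e) \<and> {pathstart (\<gamma> e), pathfinish (\<gamma> e)} = p ` e) \<and>
     (\<forall>e\<in>E. \<forall>v\<in>V. p v \<in> path_image (\<gamma> e) \<longrightarrow> v \<in> e) \<and>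
     (\<forall>e1\<in>E. \<forall>e2\<in>E. e1 \<noteq> e2 \<longrightarrow>
        path_image (\<gamma> e1) \<inter> path_image (\<gamma> e2) \<subseteq> p ` (e1 \<inter> e2))"

definition planar :: "'a set \<Rightarrow> 'a set set \<Rightarrow> bool" where
  "planar V E \<longleftrightarrow> (\<exists>p \<gamma>. plane_embedding V E p \<gamma>)"

definition drawing :: "'a set \<Rightarrow> 'a set set \<Rightarrow> ('a \<Rightarrow> complex) \<Rightarrow> ('a set \<Rightarrow> real \<Rightarrow> complex) \<Rightarrow> complex set" where
  "drawing V E p \<gamma> = p ` V \<union> (\<Union>e\<in>E. path_image (\<gamma> e))"

definition faces :: "'a set \<Rightarrow> 'a set set \<Rightarrow> ('a \<Rightarrow> complex) \<Rightarrow> ('a set \<Rightarrow> real \<Rightarrow> complex) \<Rightarrow> complex set set" where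
  "faces V E p \<gamma> = components (- drawing V E p \<gamma>)"

text \<open>The edge ab lies on a 3-face: some face is bounded by a triangle abc,
  i.e. its topological boundary is exactly the drawing of the triangle abc
  (for a simple plane graph, the faces of length 3 are exactly these).\<close>
definition edge_on_3face ::
  "'a set \<Rightarrow> 'a set set \<Rightarrow> ('a \<Rightarrow> complex) \<Rightarrow> ('a set \<Rightarrow> real \<Rightarrow> complex) \<Rightarrow> 'a \<Rightarrow> 'a \<Rightarrow> bool" where
  "edge_on_3face V E p \<gamma> a b \<longleftrightarrow>
     (\<exists>F c. F \<in> faces V E p \<gamma> \<and> a \<noteq> b \<and> c \<noteq> a \<and> c \<noteq> b \<and>
        {a, b} \<in> E \<and> {b, c} \<in> E \<and> {a, c} \<in> E \<and>
        frontier F = path_image (\<gamma> {a, b}) \<union> path_image (\<gamma> {b, c}) \<union> path_image (\<gamma> {a, c}))"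

end

theory Submission
  imports Defs
begin

definition okc :: "'a set \<Rightarrow> 'a set set \<Rightarrow> ('a \<Rightarrow> nat) \<Rightarrow> ('a set \<Rightarrow> nat) \<Rightarrow> 'a set \<Rightarrow> bool" where
  "okc V E cv ce S \<longleftrightarrow>
     (\<forall>a\<in>V-S. cv a \<in> {1..9}) \<and> (\<forall>e\<in>E. ce e \<in> {1..9::nat}) \<and>
     (\<forall>x y. {x, y} \<in> E \<longrightarrow> x \<noteq> y \<longrightarrow> x \<notin> S \<longrightarrow> y \<notin> S \<longrightarrow> cv x \<noteq> cv y) \<and>
     (\<forall>e1\<in>E. \<forall>e2\<in>E. e1 \<noteq> e2 \<and> e1 \<inter> e2 \<noteq> {} \<longrightarrow> ce e1 \<noteq> ce e2) \<and>
     (\<forall>e\<in>E. \<forall>a\<in>e. a \<notin> S \<longrightarrow> cv a \<noteq> ce e)"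

lemma okcI:
  assumes "\<And>a. a \<in> V \<Longrightarrow> a \<notin> S \<Longrightarrow> cv a \<in> {1..9}"
    "\<And>e. e \<in> E \<Longrightarrow> ce e \<in> {1..9}"
    "\<And>x y. {x, y} \<in> E \<Longrightarrow> x \<noteq> y \<Longrightarrow> x \<notin> S \<Longrightarrow> y \<notin> S \<Longrightarrow> cv x \<noteq> cv y"
    "\<And>e1 e2. e1 \<in> E \<Longrightarrow> e2 \<in> E \<Longrightarrow> e1 \<noteq> e2 \<Longrightarrow> e1 \<inter> e2 \<noteq> {} \<Longrightarrow> ce e1 \<noteq> ce e2"
    "\<And>e a. e \<in> E \<Longrightarrow> a \<in> e \<Longrightarrow> a \<notin> S \<Longrightarrow> cv a \<noteq> ce e"
  shows "okc V E cv ce S"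
  unfolding okc_def
  apply (intro conjI ballI allI impI)
  using assms apply simp_all
  done

lemma okcD:
  assumes "okc V E cv ce S"
  shows okcD1: "\<And>a. a \<in> V \<Longrightarrow> a \<notin> S \<Longrightarrow> cv a \<in> {1..9}"
    and okcD2: "\<And>e. e \<in> E \<Longrightarrow> ce e \<in> {1..9}"
    and okcD3: "\<And>x y. {x, y} \<in> E \<Longrightarrow> x \<noteq> y \<Longrightarrow> x \<notin> S \<Longrightarrow> y \<notin> S \<Longrightarrow> cv x \<noteq> cv y"
    and okcD4: "\<And>e1 e2. e1 \<in> E \<Longrightarrow> e2 \<in> E \<Longrightarrow> e1 \<noteq> e2 \<Longrightarrow> e1 \<inter> e2 \<noteq> {} \<Longrightarrow> ce e1 \<noteq> ce e2"
    and okcD5: "\<And>e a. e \<in> E \<Longrightarrow> a \<in> e \<Longrightarrow> a \<notin> S \<Longrightarrow> cv a \<noteq> ce e"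
  using assms unfolding okc_def by simp_all

lemma okc_total: "okc V E cv ce {} = total_coloring 9 V E cv ce"
  unfolding okc_def total_coloring_def by auto

lemma okc_mono: "okc V E cv ce S \<Longrightarrow> E' \<subseteq> E \<Longrightarrow> S \<subseteq> S' \<Longrightarrow> okc V E' cv ce S'"
  apply (rule okcI)
  apply (drule okcD1; auto)
  apply (drule okcD2; auto)
  apply (drule okcD3; auto)
  apply (drule okcD4; auto)
  apply (drule okcD5; auto)
  done

lemma okc_add:
  assumes ok: "okc V (E - {e0}) cv ce S" and c: "c \<in> {1..9}"
    and h3: "\<And>e. e \<in> E \<Longrightarrow> e \<noteq> e0 \<Longrightarrow> e \<inter> e0 \<noteq> {} \<Longrightarrow> ce e \<noteq> c"
    and h4: "\<And>a. a \<in> e0 \<Longrightarrow> a \<notin> S \<Longrightarrow> cv a \<noteq> c"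
    and h5: "\<And>x y. e0 = {x, y} \<Longrightarrow> x \<noteq> y \<Longrightarrow> x \<notin> S \<Longrightarrow> y \<notin> S \<Longrightarrow> cv x \<noteq> cv y"
  shows "okc V E cv (ce(e0 := c)) S"
proof (rule okcI)
  show "cv a \<in> {1..9}" if "a \<in> V" "a \<notin> S" for a using okcD1[OF ok] that .
  show "(ce(e0 := c)) e \<in> {1..9}" if "e \<in> E" for e
    using okcD2[OF ok, of e] that c by (cases "e = e0") auto
  show "cv x \<noteq> cv y" if h: "{x, y} \<in> E" "x \<noteq> y" "x \<notin> S" "y \<notin> S" for x y
  proof (cases "{x, y} = e0")
    case True then show ?thesis using h5 h by blast
  next
    case False then have "{x, y} \<in> E - {e0}" using h by blast
    then show ?thesis using okcD3[OF ok] h by blast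
  qed
  show "(ce(e0 := c)) e1 \<noteq> (ce(e0 := c)) e2"
    if h: "e1 \<in> E" "e2 \<in> E" "e1 \<noteq> e2" "e1 \<inter> e2 \<noteq> {}" for e1 e2
  proof (cases "e1 = e0")
    case True then show ?thesis using h3[of e2] h by (auto simp: Int_commute)
  next
    case F: False
    show ?thesis
    proof (cases "e2 = e0")
      case True then show ?thesis using h3[of e1] h F by auto
    next
      case False then show ?thesis using F h okcD4[OF ok, of e1 e2] by auto
    qed
  qed
  show "cv a \<noteq> (ce(e0 := c)) e" if "e \<in> E" "a \<in> e" "a \<notin> S" for e a
    using okcD5[OF ok, of e a] h4[of a] that by (cases "e = e0") auto
qed

lemma okc_fill:
  assumes ok: "okc V E cv ce S" and aS: "a \<in> S" and fin: "finite E"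
    and dg: "card {e\<in>E. a\<in>e} \<le> 4"
  shows "\<exists>c. okc V E (cv(a := c)) ce (S - {a})"
proof -
  let ?Ea = "{e\<in>E. a\<in>e}"
  let ?F = "ce ` ?Ea \<union> (\<lambda>e. cv (the_elem (e - {a}))) ` ?Ea"
  have finEa: "finite ?Ea" using fin by simp
  have "card ?F \<le> card (ce ` ?Ea) + card ((\<lambda>e. cv (the_elem (e - {a}))) ` ?Ea)"
    by (rule card_Un_le)
  also have "\<dots> \<le> card ?Ea + card ?Ea" by (intro add_mono card_image_le finEa)
  finally have cF: "card ?F \<le> 8" using dg by simp
  have "\<not> {1..9::nat} \<subseteq> ?F"
  proof
    assume "{1..9::nat} \<subseteq> ?F"
    then have "card {1..9::nat} \<le> card ?F" by (intro card_mono) (use finEa in simp_all)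
    then show False using cF by simp
  qed
  then obtain c where c: "c \<in> {1..9}" "c \<notin> ?F" by (meson subsetI)
  have key: "cv y \<noteq> c" if "{a, y} \<in> E" "y \<noteq> a" for y
  proof -
    have "the_elem ({a, y} - {a}) = y" using that by auto
    then have "cv y \<in> ?F" using that by force
    then show ?thesis using c by auto
  qed
  have "okc V E (cv(a := c)) ce (S - {a})"
  proof (rule okcI)
    show "(cv(a := c)) b \<in> {1..9}" if "b \<in> V" "b \<notin> S - {a}" for b
      using okcD1[OF ok, of b] c that by (cases "b = a") simp_all
    show "ce e \<in> {1..9}" if "e \<in> E" for e using okcD2[OF ok] that .
    show "ce e1 \<noteq> ce e2" if "e1 \<in> E" "e2 \<in> E" "e1 \<noteq> e2" "e1 \<inter> e2 \<noteq> {}" for e1 e2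
      using okcD4[OF ok] that by simp
    show "(cv(a := c)) b \<noteq> ce e" if e: "e \<in> E" "b \<in> e" "b \<notin> S - {a}" for e b
    proof (cases "b = a")
      case True
      then have "ce e \<in> ?F" using e by simp
      then show ?thesis using True c by auto
    next
      case False then show ?thesis using e okcD5[OF ok, of e b] by simp
    qed
    show "(cv(a := c)) x \<noteq> (cv(a := c)) y"
      if xy: "{x, y} \<in> E" "x \<noteq> y" "x \<notin> S - {a}" "y \<notin> S - {a}" for x y
    proof (cases "x = a")
      case True then show ?thesis using key[of y] xy by simp
    next
      case F1: False
      show ?thesis
      proof (cases "y = a")
        case True then show ?thesis using key[of x] xy F1 by (simp add: insert_commute)
      next
        case False then show ?thesis using F1 xy okcD3[OF ok, of x y] by simp
      qed
    qed
  qed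
  then show ?thesis by blast
qed

lemma sub_colorable:
  fixes V :: "'a set" and E :: "'a set set"
  assumes G: "simple_graph V E"
    and emb: "plane_embedding V E p \<gamma>"
    and dg: "\<And>a. a \<in> V \<Longrightarrow> deg E a \<le> 8"
    and no_fan: "\<not> has_4fan V E"
    and minimal: "\<And>(VH :: nat set) EH. simple_graph VH EH \<Longrightarrow> planar VH EH \<Longrightarrow>
                     (\<forall>x\<in>VH. deg EH x \<le> 8) \<Longrightarrow> \<not> has_4fan VH EH \<Longrightarrow>
                     card VH + card EH < card V + card E \<Longrightarrow> total_colorable 9 VH EH"
    and e0: "e0 \<in> E"
  shows "total_colorable 9 V (E - {e0})"
proof -
  have finV: "finite V" using G unfolding simple_graph_def by simp
  have Eform: "\<And>e. e \<in> E \<Longrightarrow> \<exists>x y. e = {x, y} \<and> x \<noteq> y \<and> x \<in> V \<and> y \<in> V"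
    using G unfolding simple_graph_def by simp
  have Esub: "\<And>e. e \<in> E \<Longrightarrow> e \<subseteq> V" using Eform by fastforce
  have finE: "finite E" using finV Esub by (meson PowI finite_Pow_iff finite_subset subsetI)
  obtain f :: "'a \<Rightarrow> nat" and n where "f ` V = {i. i < n}" and inj: "inj_on f V"
    using finite_imp_inj_to_nat_seg[OF finV] by blast
  define g where "g = inv_into V f"
  have gf: "\<And>a. a \<in> V \<Longrightarrow> g (f a) = a" unfolding g_def using inj by (simp add: inv_into_f_f)
  have fg: "\<And>b. b \<in> f ` V \<Longrightarrow> f (g b) = b" unfolding g_def by (simp add: f_inv_into_f)
  have gV: "\<And>b. b \<in> f ` V \<Longrightarrow> g b \<in> V" unfolding g_def by (simp add: inv_into_into)
  have ginj: "inj_on g (f ` V)" unfolding g_def by (rule inj_on_inv_into) simp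
  have img: "\<And>e. e \<subseteq> V \<Longrightarrow> g ` f ` e = e"
  proof -
    fix e assume "e \<subseteq> V"
    then show "g ` f ` e = e" using gf by (force simp: image_image)
  qed
  define E' where "E' = E - {e0}"
  define VH where "VH = f ` V"
  define EH where "EH = (\<lambda>e. f ` e) ` E'"
  have E'E: "E' \<subseteq> E" unfolding E'_def by blast
  have injE: "inj_on (\<lambda>e. f ` e) E'"
  proof (rule inj_onI)
    fix e1 e2 assume "e1 \<in> E'" "e2 \<in> E'" "f ` e1 = f ` e2"
    then show "e1 = e2" using img[of e1] img[of e2] Esub E'E by (metis subsetD)
  qed
  have memf: "\<And>a e. a \<in> V \<Longrightarrow> e \<in> E \<Longrightarrow> (f a \<in> f ` e) = (a \<in> e)"
    using inj Esub by (meson inj_on_image_mem_iff)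
  have sH: "simple_graph VH EH"
    unfolding simple_graph_def
  proof (intro conjI ballI)
    show "finite VH" unfolding VH_def using finV by simp
    fix e assume "e \<in> EH"
    then obtain e1 where e1: "e1 \<in> E'" "e = f ` e1" unfolding EH_def by blast
    then obtain x y where xy: "e1 = {x, y}" "x \<noteq> y" "x \<in> V" "y \<in> V" using Eform E'E by blast
    have "f x \<noteq> f y" using inj xy by (meson inj_on_contraD)
    then show "\<exists>x y. e = {x, y} \<and> x \<noteq> y \<and> x \<in> VH \<and> y \<in> VH"
      using xy e1 unfolding VH_def by auto
  qed
  have pH: "planar VH EH"
    unfolding planar_def
  proof (intro exI)
    let ?p = "\<lambda>b. p (g b)" and ?g = "\<lambda>e. \<gamma> (g ` e)"
    have embE: "inj_on p V"
      "\<And>e. e \<in> E \<Longrightarrow> arc (\<gamma> e) \<and> {pathstart (\<gamma> e), pathfinish (\<gamma> e)} = p ` e"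
      "\<And>e v. e \<in> E \<Longrightarrow> v \<in> V \<Longrightarrow> p v \<in> path_image (\<gamma> e) \<Longrightarrow> v \<in> e"
      "\<And>e1 e2. e1 \<in> E \<Longrightarrow> e2 \<in> E \<Longrightarrow> e1 \<noteq> e2 \<Longrightarrow>
          path_image (\<gamma> e1) \<inter> path_image (\<gamma> e2) \<subseteq> p ` (e1 \<inter> e2)"
      using emb unfolding plane_embedding_def by simp_all
    have EHE: "g ` e \<in> E \<and> e = f ` (g ` e)" if eH0: "e \<in> EH" for e
    proof -
      obtain e1 where e1: "e1 \<in> E'" "e = f ` e1" using eH0 unfolding EH_def by blast
      have "g ` e = e1" using img[of e1] e1 Esub E'E by blast
      then show ?thesis using e1 E'E by blast
    qed
    show "plane_embedding VH EH ?p ?g"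
      unfolding plane_embedding_def
    proof (intro conjI ballI impI)
      show "inj_on ?p VH"
      proof (rule inj_onI)
        fix a b assume "a \<in> VH" "b \<in> VH" "p (g a) = p (g b)"
        then show "a = b" using embE(1) gV ginj unfolding VH_def by (metis inj_onD)
      qed
      fix e assume eH: "e \<in> EH"
      have ge: "g ` e \<in> E" "e = f ` (g ` e)" using EHE[OF eH] by auto
      have pe: "?p ` e = p ` (g ` e)" by (simp add: image_image)
      show "arc (?g e)" using embE(2)[OF ge(1)] by simp
      show "{pathstart (?g e), pathfinish (?g e)} = ?p ` e" using embE(2)[OF ge(1)] pe by simp
      {
        fix v assume vH: "v \<in> VH" and pv: "?p v \<in> path_image (?g e)"
        have "g v \<in> g ` e" using embE(3)[OF ge(1) gV pv] vH unfolding VH_def by simp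
        then have "f (g v) \<in> f ` (g ` e)" by simp
        then show "v \<in> e" using fg vH ge(2) unfolding VH_def by simp
      }
      {
        fix e2 assume e2H: "e2 \<in> EH" and ne: "e \<noteq> e2"
        have ge2: "g ` e2 \<in> E" "e2 = f ` (g ` e2)" using EHE[OF e2H] by auto
        have ne': "g ` e \<noteq> g ` e2" using ne ge ge2 by metis
        have "path_image (?g e) \<inter> path_image (?g e2) \<subseteq> p ` (g ` e \<inter> g ` e2)"
          using embE(4)[OF ge(1) ge2(1) ne'] by simp
        also have "g ` e \<inter> g ` e2 = g ` (e \<inter> e2)"
        proof -
          have "e \<subseteq> f ` V" "e2 \<subseteq> f ` V" using ge ge2 Esub by (metis image_mono)+
          then show ?thesis using ginj by (simp add: inj_on_image_Int)
        qed
        finally show "path_image (?g e) \<inter> path_image (?g e2) \<subseteq> ?p ` (e \<inter> e2)"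
          by (simp add: image_image)
      }
    qed
  qed
  have dH: "\<forall>x\<in>VH. deg EH x \<le> 8"
  proof
    fix x assume "x \<in> VH"
    then obtain a where a: "a \<in> V" "x = f a" unfolding VH_def by blast
    have "{e\<in>EH. x \<in> e} = (\<lambda>e. f ` e) ` {e\<in>E'. a \<in> e}"
      unfolding EH_def using a memf E'E by auto
    then have "deg EH x = card {e\<in>E'. a \<in> e}"
      unfolding deg_def using injE by (simp add: card_image inj_on_subset)
    also have "\<dots> \<le> card {e\<in>E. a \<in> e}" using finE E'E by (intro card_mono) auto
    also have "\<dots> \<le> 8" using dg[OF a(1)] unfolding deg_def .
    finally show "deg EH x \<le> 8" .
  qed
  have fH: "\<not> has_4fan VH EH"
  proof
    assume "has_4fan VH EH"
    then obtain c uu where c: "c \<in> VH" "inj_on uu {1..5::nat}" "uu ` {1..5} \<subseteq> VH"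
      "c \<notin> uu ` {1..5}" "\<forall>j\<in>{1..5}. {c, uu j} \<in> EH" "\<forall>j\<in>{1..4}. {uu j, uu (Suc j)} \<in> EH"
      unfolding has_4fan_def by blast
    have edge: "{g a, g b} \<in> E" if abH: "{a, b} \<in> EH" for a b
    proof -
      obtain e where "e \<in> E'" "{a, b} = f ` e" using abH unfolding EH_def by blast
      then have "g ` {a, b} = e" using img Esub E'E by (metis subsetD)
      then show ?thesis using \<open>e \<in> E'\<close> E'E by auto
    qed
    have "has_4fan V E"
      unfolding has_4fan_def
    proof (intro exI conjI)
      show "g c \<in> V" using c(1) gV unfolding VH_def by simp
      show "inj_on (g \<circ> uu) {1..5}" using c(2,3) ginj unfolding VH_def
        by (meson comp_inj_on inj_on_subset)
      show "(g \<circ> uu) ` {1..5} \<subseteq> V" using c(3) gV unfolding VH_def by auto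
      show "g c \<notin> (g \<circ> uu) ` {1..5}"
      proof
        assume "g c \<in> (g \<circ> uu) ` {1..5}"
        then obtain j where j: "j \<in> {1..5}" "g c = g (uu j)" by auto
        then have "c = uu j" using ginj c(1,3) unfolding VH_def by (meson image_subset_iff inj_onD)
        then show False using c(4) j by auto
      qed
      show "\<forall>j\<in>{1..5}. {g c, (g \<circ> uu) j} \<in> E" using c(5) edge by simp
      show "\<forall>j\<in>{1..4}. {(g \<circ> uu) j, (g \<circ> uu) (Suc j)} \<in> E" using c(6) edge by simp
    qed
    then show False using no_fan by simp
  qed
  have cV: "card VH = card V" unfolding VH_def using inj by (simp add: card_image)
  have cE: "card EH = card E'" unfolding EH_def using injE by (simp add: card_image)
  have "card E' < card E" unfolding E'_def using finE e0 by (meson card_Diff1_less)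
  then have sz: "card VH + card EH < card V + card E" using cV cE by simp
  obtain cv ce where col: "total_coloring 9 VH EH cv ce"
    using minimal[OF sH pH dH fH sz] unfolding total_colorable_def by blast
  have fE: "\<And>e. e \<in> E' \<Longrightarrow> f ` e \<in> EH" unfolding EH_def by simp
  have "total_coloring 9 V E' (cv \<circ> f) (\<lambda>e. ce (f ` e))"
    unfolding total_coloring_def
  proof (intro conjI ballI allI impI)
    have C: "\<forall>v\<in>VH. cv v \<in> {1..9}" "\<forall>e\<in>EH. ce e \<in> {1..9}"
      "\<forall>x y. {x, y} \<in> EH \<longrightarrow> x \<noteq> y \<longrightarrow> cv x \<noteq> cv y"
      "\<forall>e1\<in>EH. \<forall>e2\<in>EH. e1 \<noteq> e2 \<and> e1 \<inter> e2 \<noteq> {} \<longrightarrow> ce e1 \<noteq> ce e2"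
      "\<forall>e\<in>EH. \<forall>v\<in>e. cv v \<noteq> ce e" using col unfolding total_coloring_def by simp_all
    fix a assume "a \<in> V" then show "(cv \<circ> f) a \<in> {1..9}" using C(1) unfolding VH_def by simp
  next
    fix e assume "e \<in> E'" then show "ce (f ` e) \<in> {1..9}"
      using col fE unfolding total_coloring_def by simp
  next
    fix x y assume xy: "{x, y} \<in> E'" "x \<noteq> y"
    then have "x \<in> V" "y \<in> V" using Esub E'E by auto
    then have "f x \<noteq> f y" using inj xy(2) by (meson inj_on_contraD)
    moreover have "{f x, f y} \<in> EH" using fE[OF xy(1)] by simp
    ultimately show "(cv \<circ> f) x \<noteq> (cv \<circ> f) y" using col unfolding total_coloring_def by simp
  next
    fix e1 e2 assume h: "e1 \<in> E'" "e2 \<in> E'" "e1 \<noteq> e2 \<and> e1 \<inter> e2 \<noteq> {}"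
    have "f ` e1 \<noteq> f ` e2" using injE h by (meson inj_onD)
    moreover have "f ` e1 \<inter> f ` e2 \<noteq> {}" using h by blast
    ultimately show "ce (f ` e1) \<noteq> ce (f ` e2)" using fE[OF h(1)] fE[OF h(2)] col
      unfolding total_coloring_def by simp
  next
    fix e a assume h: "e \<in> E'" "a \<in> e"
    then show "(cv \<circ> f) a \<noteq> ce (f ` e)" using fE[OF h(1)] col
      unfolding total_coloring_def by simp
  qed
  then show ?thesis unfolding total_colorable_def E'_def by blast
qed

theorem lemma2p5:
  fixes V :: "'a set" and E :: "'a set set"
    and p :: "'a \<Rightarrow> complex" and \<gamma> :: "'a set \<Rightarrow> real \<Rightarrow> complex"
    and v u :: 'a
  assumes G: "simple_graph V E"
    and emb: "plane_embedding V E p \<gamma>"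
    and maxdeg: "max_degree V E = 8"
    and no_fan: "\<not> has_4fan V E"
    and not_col: "\<not> total_colorable 9 V E"
    and minimal: "\<And>(VH :: nat set) EH. simple_graph VH EH \<Longrightarrow> planar VH EH \<Longrightarrow>
                     (\<forall>x\<in>VH. deg EH x \<le> 8) \<Longrightarrow> \<not> has_4fan VH EH \<Longrightarrow>
                     card VH + card EH < card V + card E \<Longrightarrow> total_colorable 9 VH EH"
    and v: "v \<in> V" "deg E v = 7"
    and u: "u \<in> V" "deg E u = 3" "edge_on_3face V E p \<gamma> v u"
  shows "\<not> (\<exists>w\<in>V. w \<noteq> u \<and> deg E w = 3 \<and> edge_on_3face V E p \<gamma> v w)"
proof
  assume "\<exists>w\<in>V. w \<noteq> u \<and> deg E w = 3 \<and> edge_on_3face V E p \<gamma> v w"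
  then obtain w where w: "w \<in> V" "w \<noteq> u" "deg E w = 3" "edge_on_3face V E p \<gamma> v w" by blast
  obtain x where x: "v \<noteq> u" "{v, u} \<in> E" "{u, x} \<in> E" "{v, x} \<in> E" "x \<noteq> v" "x \<noteq> u"
    using u(3) unfolding edge_on_3face_def by blast
  have vw: "{v, w} \<in> E" "v \<noteq> w" using w(4) unfolding edge_on_3face_def by blast+
  have finV: "finite V" using G unfolding simple_graph_def by simp
  have Eform: "\<And>e. e \<in> E \<Longrightarrow> \<exists>x y. e = {x, y} \<and> x \<noteq> y \<and> x \<in> V \<and> y \<in> V"
    using G unfolding simple_graph_def by simp
  have Esub: "\<And>e. e \<in> E \<Longrightarrow> e \<subseteq> V" using Eform by fastforce
  have finE: "finite E" using finV Esub by (meson PowI finite_Pow_iff finite_subset subsetI)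
  have dg: "\<And>a. a \<in> V \<Longrightarrow> deg E a \<le> 8"
    using maxdeg finV unfolding max_degree_def by (metis Max_ge finite_imageI imageI)
  have colE: "\<And>e0. e0 \<in> E \<Longrightarrow> total_colorable 9 V (E - {e0})"
    by (rule sub_colorable[OF G emb dg no_fan minimal]) auto
  define S where "S = {u, w}"
  have finish: False if okS: "okc V E cv ce S" for cv ce
  proof -
    have "card {e\<in>E. u\<in>e} \<le> 4" using u(2) unfolding deg_def by simp
    then obtain c1 where c1: "okc V E (cv(u := c1)) ce (S - {u})"
      using okc_fill[OF okS _ finE] unfolding S_def by blast
    have Sw: "S - {u} = {w}" unfolding S_def using w(2) by auto
    have "card {e\<in>E. w\<in>e} \<le> 4" using w(3) unfolding deg_def by simp
    then obtain c2 where "okc V E ((cv(u := c1))(w := c2)) ce ({w} - {w})"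
      using okc_fill[OF c1[unfolded Sw] _ finE] by blast
    then have "okc V E ((cv(u := c1))(w := c2)) ce {}" by simp
    then have "total_coloring 9 V E ((cv(u := c1))(w := c2)) ce" unfolding okc_total .
    then show False using not_col unfolding total_colorable_def by blast
  qed
  have uS: "u \<in> S" and wS: "w \<in> S" and vS: "v \<notin> S" unfolding S_def using x(1) vw(2) by auto
  show False
  proof (cases "{u, w} \<in> E")
    case True
    obtain cv ce where "total_coloring 9 V (E - {{u, w}}) cv ce"
      using colE[OF True] unfolding total_colorable_def by blast
    then have "okc V (E - {{u, w}}) cv ce {}" unfolding okc_total .
    then have ok0: "okc V (E - {{u, w}}) cv ce S" by (rule okc_mono) auto
    let ?F = "ce ` ({e\<in>E. u\<in>e} \<union> {e\<in>E. w\<in>e})"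
    have "card ?F \<le> card ({e\<in>E. u\<in>e} \<union> {e\<in>E. w\<in>e})" using finE by (simp add: card_image_le)
    also have "\<dots> \<le> card {e\<in>E. u\<in>e} + card {e\<in>E. w\<in>e}" by (rule card_Un_le)
    finally have cF: "card ?F \<le> 6" using u(2) w(3) unfolding deg_def by simp
    have "\<not> {1..9::nat} \<subseteq> ?F"
    proof
      assume "{1..9::nat} \<subseteq> ?F"
      then have "card {1..9::nat} \<le> card ?F" by (intro card_mono) (use finE in simp_all)
      then show False using cF by simp
    qed
    then obtain c where c: "c \<in> {1..9}" "c \<notin> ?F" by (meson subsetI)
    have "okc V E cv (ce({u, w} := c)) S"
    proof (rule okc_add[OF ok0 c(1)])
      show "ce e \<noteq> c" if "e \<in> E" "e \<noteq> {u, w}" "e \<inter> {u, w} \<noteq> {}" for e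
      proof -
        have "u \<in> e \<or> w \<in> e" using that(3) by blast
        then have "ce e \<in> ?F" using that(1) by blast
        then show ?thesis using c(2) by auto
      qed
      show "cv a \<noteq> c" if "a \<in> {u, w}" "a \<notin> S" for a using that uS wS by auto
      show "cv a \<noteq> cv b" if "{u, w} = {a, b}" "a \<noteq> b" "a \<notin> S" "b \<notin> S" for a b
        using that uS wS by (auto simp: doubleton_eq_iff)
    qed
    then show False using finish by blast
  next
    case False
    have xw: "x \<noteq> w" using False x(3) by auto
    define E1 where "E1 = E - {{v, u}}"
    obtain cv ce where "total_coloring 9 V E1 cv ce"
      using colE[OF x(2)] unfolding total_colorable_def E1_def by blast
    then have "okc V E1 cv ce {}" unfolding okc_total .
    then have ok0: "okc V E1 cv ce S" by (rule okc_mono) auto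
    have ne: "{v, w} \<noteq> {v, u}" "{u, x} \<noteq> {v, u}" "{v, x} \<noteq> {v, u}" "{v, x} \<noteq> {v, w}"
      "{u, x} \<noteq> {v, w}" "{u, x} \<noteq> {v, x}"
      using x w(2) vw(2) xw by (auto simp: doubleton_eq_iff)
    have inE1: "{v, w} \<in> E1" "{u, x} \<in> E1" "{v, x} \<in> E1"
      unfolding E1_def using ne x vw by auto
    have E1E: "E1 \<subseteq> E" unfolding E1_def by blast
    have finE1: "finite E1" using finE E1E by (rule finite_subset[rotated])
    define Ev where "Ev = {e\<in>E1. v\<in>e}"
    define Eu where "Eu = {e\<in>E1. u\<in>e}"
    define Ew where "Ew = {e\<in>E1. w\<in>e} - {{v, w}}"
    have cEv: "card Ev = 6"
    proof -
      have "Ev = {e\<in>E. v\<in>e} - {{v, u}}" unfolding Ev_def E1_def by auto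
      then show ?thesis using v(2) x(2) finE unfolding deg_def by (simp add: card_Diff_singleton)
    qed
    have cEu: "card Eu = 2"
    proof -
      have "Eu = {e\<in>E. u\<in>e} - {{v, u}}" unfolding Eu_def E1_def by auto
      then show ?thesis using u(2) x(2) finE unfolding deg_def by (simp add: card_Diff_singleton)
    qed
    have cEw: "card Ew = 2"
    proof -
      have "Ew = {e\<in>E. w\<in>e} - {{v, w}}" unfolding Ew_def E1_def using w(2) vw(2) by auto
      then show ?thesis using w(3) vw(1) finE unfolding deg_def by (simp add: card_Diff_singleton)
    qed
    define A where "A = insert (cv v) (ce ` Ev)"
    define U where "U = ce ` Eu"
    define W where "W = ce ` Ew"
    have finA: "finite A" "finite U" "finite W"
      unfolding A_def U_def W_def Ev_def Eu_def Ew_def using finE1 by auto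
    have cA: "card A \<le> 7"
    proof -
      have "finite (ce ` Ev)" using finE1 unfolding Ev_def by simp
      then have "card A \<le> Suc (card (ce ` Ev))" unfolding A_def by (simp add: card_insert_if)
      also have "card (ce ` Ev) \<le> 6" using cEv card_image_le[of Ev ce] finE1
        unfolding Ev_def by simp
      finally show ?thesis by simp
    qed
    have cU: "card U \<le> 2" unfolding U_def using cEu card_image_le[of Eu ce] finE1
      unfolding Eu_def by simp
    have cW: "card W \<le> 2" unfolding W_def using cEw card_image_le[of Ew ce] finE1
      unfolding Ew_def by simp
    have inA: "\<And>e. e \<in> E1 \<Longrightarrow> v \<in> e \<Longrightarrow> ce e \<in> A" unfolding A_def Ev_def by auto
    have inU: "\<And>e. e \<in> E1 \<Longrightarrow> u \<in> e \<Longrightarrow> ce e \<in> U" unfolding U_def Eu_def by auto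
    have inW: "\<And>e. e \<in> E1 \<Longrightarrow> w \<in> e \<Longrightarrow> e \<noteq> {v, w} \<Longrightarrow> ce e \<in> W" unfolding W_def Ew_def by auto
    have cvA: "cv v \<in> A" unfolding A_def by simp
    have rng: "\<And>e. e \<in> E1 \<Longrightarrow> ce e \<in> {1..9}" using okcD2[OF ok0] .
    have dist: "\<And>e1 e2. e1 \<in> E1 \<Longrightarrow> e2 \<in> E1 \<Longrightarrow> e1 \<noteq> e2 \<Longrightarrow> e1 \<inter> e2 \<noteq> {} \<Longrightarrow> ce e1 \<noteq> ce e2"
      using okcD4[OF ok0] .
    have vc: "\<And>e a. e \<in> E1 \<Longrightarrow> a \<in> e \<Longrightarrow> a \<notin> S \<Longrightarrow> cv a \<noteq> ce e" using okcD5[OF ok0] .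
    have xS: "x \<notin> S" unfolding S_def using x xw by auto
    have E1eq: "E - {{v, u}} = E1" unfolding E1_def ..
    let ?eps = "ce {v, w}"
    have epsA: "?eps \<in> A" using inA[OF inE1(1)] by simp
    show False
    proof (cases "\<exists>c\<in>{1..9}. c \<notin> A \<union> U")
      case True
      then obtain c where c: "c \<in> {1..9}" "c \<notin> A" "c \<notin> U" by blast
      have "okc V E cv (ce({v, u} := c)) S"
      proof (rule okc_add)
        show "okc V (E - {{v, u}}) cv ce S" using ok0 E1eq by simp
        show "c \<in> {1..9}" by fact
        show "ce e \<noteq> c" if "e \<in> E" "e \<noteq> {v, u}" "e \<inter> {v, u} \<noteq> {}" for e
        proof -
          have e1: "e \<in> E1" unfolding E1_def using that by simp
          have "v \<in> e \<or> u \<in> e" using that(3) by blast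
          then show ?thesis using inA[OF e1] inU[OF e1] c by auto
        qed
        show "cv a \<noteq> c" if "a \<in> {v, u}" "a \<notin> S" for a using that uS cvA c by auto
        show "cv a \<noteq> cv b" if "{v, u} = {a, b}" "a \<noteq> b" "a \<notin> S" "b \<notin> S" for a b
          using that uS by (auto simp: doubleton_eq_iff)
      qed
      then show False using finish by blast
    next
      case False
      then have cov: "{1..9} \<subseteq> A \<union> U" by blast
      have "card {1..9::nat} \<le> card (A \<union> U)" using cov finA by (intro card_mono) auto
      moreover have "card A + card U = card (A \<union> U) + card (A \<inter> U)"
        using finA(1,2) by (rule card_Un_Int)
      ultimately have "card (A \<inter> U) = 0" "card U = 2" using cA cU by auto
      then have disj: "A \<inter> U = {}" using finA by simp
      have cU2: "card U = 2" by fact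
      show False
      proof (cases "\<exists>g\<in>U. g \<notin> W")
        case True
        then obtain g where g: "g \<in> U" "g \<notin> W" by blast
        have gA: "g \<notin> A" using g disj by blast
        have g9: "g \<in> {1..9}" using g(1) rng unfolding U_def Eu_def by auto
        define ce1 where "ce1 = ce({v, w} := g)"
        have s1: "okc V E1 cv ce1 S" unfolding ce1_def
        proof (rule okc_add)
          show "okc V (E1 - {{v, w}}) cv ce S" by (rule okc_mono[OF ok0]) auto
          show "g \<in> {1..9}" by fact
          show "ce e \<noteq> g" if "e \<in> E1" "e \<noteq> {v, w}" "e \<inter> {v, w} \<noteq> {}" for e
          proof -
            have "v \<in> e \<or> w \<in> e" using that(3) by blast
            then show ?thesis using inA[OF that(1)] inW[OF that(1) _ that(2)] g gA by auto
          qed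
          show "cv a \<noteq> g" if "a \<in> {v, w}" "a \<notin> S" for a using that wS cvA gA by auto
          show "cv a \<noteq> cv b" if "{v, w} = {a, b}" "a \<noteq> b" "a \<notin> S" "b \<notin> S" for a b
            using that wS by (auto simp: doubleton_eq_iff)
        qed
        have "okc V E cv (ce1({v, u} := ?eps)) S"
        proof (rule okc_add)
          show "okc V (E - {{v, u}}) cv ce1 S" using s1 E1eq by simp
          show "?eps \<in> {1..9}" using rng inE1 by simp
          show "ce1 e \<noteq> ?eps" if "e \<in> E" "e \<noteq> {v, u}" "e \<inter> {v, u} \<noteq> {}" for e
          proof -
            have e1: "e \<in> E1" unfolding E1_def using that by simp
            show ?thesis
            proof (cases "e = {v, w}")
              case True then show ?thesis unfolding ce1_def using epsA gA by auto
            next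
              case False
              have "v \<in> e \<or> u \<in> e" using that(3) by blast
              then show ?thesis
              proof
                assume "v \<in> e" then show ?thesis
                  unfolding ce1_def using dist[OF e1 inE1(1) False] False by auto
              next
                assume "u \<in> e" then show ?thesis
                  unfolding ce1_def using inU[OF e1] epsA disj False by auto
              qed
            qed
          qed
          show "cv a \<noteq> ?eps" if "a \<in> {v, u}" "a \<notin> S" for a
            using that uS vc[OF inE1(1), of v] vS by auto
          show "cv a \<noteq> cv b" if "{v, u} = {a, b}" "a \<noteq> b" "a \<notin> S" "b \<notin> S" for a b
            using that uS by (auto simp: doubleton_eq_iff)
        qed
        then show False using finish by blast
      next
        case False
        then have UW: "U \<subseteq> W" by blast
        then have "card U \<le> card W" using finA by (intro card_mono) auto
        then have WU: "W = U" using UW cU2 cW finA by (metis card_subset_eq le_antisym)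
        let ?al = "ce {u, x}" and ?ph = "ce {v, x}"
        have alU: "?al \<in> U" using inU[OF inE1(2)] by simp
        have phA: "?ph \<in> A" using inA[OF inE1(3)] by simp
        have alA: "?al \<notin> A" and phU: "?ph \<notin> U" using alU phA disj by blast+
        define ce2 where "ce2 = ce({v, x} := ?al)"
        define ce3 where "ce3 = ce2({u, x} := ?ph)"
        define ce4 where "ce4 = ce3({v, w} := ?ph)"
        have s1: "okc V (E1 - {{u, x}}) cv ce2 S" unfolding ce2_def
        proof (rule okc_add)
          show "okc V (E1 - {{u, x}} - {{v, x}}) cv ce S" by (rule okc_mono[OF ok0]) auto
          show "?al \<in> {1..9}" using rng inE1 by simp
          show "ce e \<noteq> ?al" if "e \<in> E1 - {{u, x}}" "e \<noteq> {v, x}" "e \<inter> {v, x} \<noteq> {}" for e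
          proof -
            have e1: "e \<in> E1" "e \<noteq> {u, x}" using that(1) by auto
            have "v \<in> e \<or> x \<in> e" using that(3) by blast
            then show ?thesis
            proof
              assume "v \<in> e" then show ?thesis using inA[OF e1(1)] alA by auto
            next
              assume "x \<in> e" then show ?thesis using dist[OF e1(1) inE1(2) e1(2)] by auto
            qed
          qed
          show "cv a \<noteq> ?al" if "a \<in> {v, x}" "a \<notin> S" for a
            using that cvA alA vc[OF inE1(2), of x] xS by auto
          show "cv a \<noteq> cv b" if "{v, x} = {a, b}" "a \<noteq> b" "a \<notin> S" "b \<notin> S" for a b
          proof -
            have "cv v \<noteq> cv x" using okcD3[OF ok0 inE1(3)] x(5) vS xS by auto
            then show ?thesis using that by (auto simp: doubleton_eq_iff)
          qed
        qed
        have s2: "okc V E1 cv ce3 S" unfolding ce3_def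
        proof (rule okc_add[OF s1])
          show "?ph \<in> {1..9}" using rng inE1 by simp
          show "ce2 e \<noteq> ?ph" if "e \<in> E1" "e \<noteq> {u, x}" "e \<inter> {u, x} \<noteq> {}" for e
          proof (cases "e = {v, x}")
            case True then show ?thesis unfolding ce2_def using alA phA by auto
          next
            case False
            have "u \<in> e \<or> x \<in> e" using that(3) by blast
            then show ?thesis
            proof
              assume "u \<in> e" then show ?thesis unfolding ce2_def using inU[OF that(1)] phU False by auto
            next
              assume "x \<in> e" then show ?thesis
                unfolding ce2_def using dist[OF that(1) inE1(3) False] False by auto
            qed
          qed
          show "cv a \<noteq> ?ph" if "a \<in> {u, x}" "a \<notin> S" for a
            using that uS vc[OF inE1(3), of x] xS by auto
          show "cv a \<noteq> cv b" if "{u, x} = {a, b}" "a \<noteq> b" "a \<notin> S" "b \<notin> S" for a b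
            using that uS by (auto simp: doubleton_eq_iff)
        qed
        have s3: "okc V E1 cv ce4 S" unfolding ce4_def
        proof (rule okc_add)
          show "okc V (E1 - {{v, w}}) cv ce3 S" by (rule okc_mono[OF s2]) auto
          show "?ph \<in> {1..9}" using rng inE1 by simp
          show "ce3 e \<noteq> ?ph" if "e \<in> E1" "e \<noteq> {v, w}" "e \<inter> {v, w} \<noteq> {}" for e
          proof -
            have nux: "e \<noteq> {u, x}" using that(3) x(1,5) w(2) xw vw(2) by auto
            show ?thesis
            proof (cases "e = {v, x}")
              case True then show ?thesis unfolding ce3_def ce2_def using alA phA nux by auto
            next
              case False
              have "v \<in> e \<or> w \<in> e" using that(3) by blast
              then show ?thesis
              proof
                assume "v \<in> e" then show ?thesis
                  unfolding ce3_def ce2_def using dist[OF that(1) inE1(3) False] False nux by auto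
              next
                assume "w \<in> e" then show ?thesis
                  unfolding ce3_def ce2_def using inW[OF that(1) _ that(2)] WU phU False nux by auto
              qed
            qed
          qed
          show "cv a \<noteq> ?ph" if "a \<in> {v, w}" "a \<notin> S" for a
            using that wS vc[OF inE1(3), of v] vS by auto
          show "cv a \<noteq> cv b" if "{v, w} = {a, b}" "a \<noteq> b" "a \<notin> S" "b \<notin> S" for a b
            using that wS by (auto simp: doubleton_eq_iff)
        qed
        have phe: "?ph \<noteq> ?eps" using dist[OF inE1(3) inE1(1) ne(4)] by auto
        have "okc V E cv (ce4({v, u} := ?eps)) S"
        proof (rule okc_add)
          show "okc V (E - {{v, u}}) cv ce4 S" using s3 E1eq by simp
          show "?eps \<in> {1..9}" using rng inE1 by simp
          show "ce4 e \<noteq> ?eps" if "e \<in> E" "e \<noteq> {v, u}" "e \<inter> {v, u} \<noteq> {}" for e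
          proof -
            have e1: "e \<in> E1" unfolding E1_def using that by simp
            consider "e = {v, w}" | "e = {u, x}" | "e = {v, x}"
              | "e \<noteq> {v, w}" "e \<noteq> {u, x}" "e \<noteq> {v, x}" by blast
            then show ?thesis
            proof cases
              case 1 then show ?thesis unfolding ce4_def using phe by simp
            next
              case 2 then show ?thesis unfolding ce4_def ce3_def using phe ne by simp
            next
              case 3 then show ?thesis unfolding ce4_def ce3_def ce2_def using alA epsA ne by auto
            next
              case 4
              then have eq: "ce4 e = ce e" unfolding ce4_def ce3_def ce2_def by simp
              have "v \<in> e \<or> u \<in> e" using that(3) by blast
              then show ?thesis
              proof
                assume "v \<in> e" then show ?thesis
                  using eq dist[OF e1 inE1(1) 4(1)] by auto
              next
                assume "u \<in> e" then show ?thesis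
                  using eq inU[OF e1] epsA disj by auto
              qed
            qed
          qed
          show "cv a \<noteq> ?eps" if "a \<in> {v, u}" "a \<notin> S" for a
            using that uS vc[OF inE1(1), of v] vS by auto
          show "cv a \<noteq> cv b" if "{v, u} = {a, b}" "a \<noteq> b" "a \<notin> S" "b \<notin> S" for a b
            using that uS by (auto simp: doubleton_eq_iff)
        qed
        then show False using finish by blast
      qed
    qed
  qed
qed

end
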